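(* Let $M=A+\Delta-\sigma vv^{\mathsf T}$ be a generalized modularity matrix, let $x\neq0$ satisfy $Mx=m_Gx$ with $v^{\mathsf T}x\ge 0$, and let $y$ be an entrywise positive eigenvector of $A+\Delta$ associated with $\lambda_1(A+\Delta)$. Then for every $\varepsilon\ge 0$, the set $S=\{i\in V: x_i+\varepsilon y_i\ge 0\}$ induces a connected subgraph $G(S)$ of $G$.
   Context: Let $V=\{1,\dots,n\}$ and let $A\in\mathbb{R}^{n\times n}$ be the adjacency matrix of an undirected connected weighted graph $G$ on $V$, possibly with loops, i.e. $A=(a_{ij})$ is symmetric, entrywise nonnegative and irreducible. A generalized modularity matrix is any matrix $M=A+\Delta-\sigma vv^{\mathsf T}$ where $\Delta$ is a real diagonal $n\times n$ matrix, $v\in\mathbb{R}^n$ is a nonzero entrywise nonnegative vector, and $\sigma>0$. Eigenvalues of a real symmetric matrix $X$ are ordered $\lambda_1(X)\ge\cdots\ge\lambda_n(X)$; $m_G:=\lambda_1(M)$. (An entrywise positive eigenvector $y$ for $\lambda_1(A+\Delta)$ exists by Perron–Frobenius theory.) For $S\subseteq V$, $G(S)$ denotes the subgraph induced by $S$, whose adjacency matrix is the principal submatrix $A(S)$; it is connected if the graph on vertex set $S$ in which distinct $i,j$ are adjacent iff $a_{ij}>0$ is connected. *)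

theory Defs
  imports "HOL-Analysis.Analysis"
begin

text \<open>Vertex set V = the finite type 'n; matrices are real^'n^'n.\<close>

definition is_eigenvalue :: "real^'n^'n \<Rightarrow> real \<Rightarrow> bool" where
  "is_eigenvalue X l \<longleftrightarrow> (\<exists>x. x \<noteq> 0 \<and> X *v x = l *\<^sub>R x)"

definition lambda_max :: "real^'n^'n \<Rightarrow> real" where
  "lambda_max X = Max {l. is_eigenvalue X l}"

definition outer :: "real^'n \<Rightarrow> real^'n \<Rightarrow> real^'n^'n" where
  "outer u w = (\<chi> i j. u $ i * w $ j)"

definition adj :: "real^'n^'n \<Rightarrow> 'n \<Rightarrow> 'n \<Rightarrow> bool" where
  "adj A i j \<longleftrightarrow> i \<noteq> j \<and> A $ i $ j > 0"

definition induced_connected :: "real^'n^'n \<Rightarrow> 'n set \<Rightarrow> bool" where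
  "induced_connected A S \<longleftrightarrow>
     (\<forall>i\<in>S. \<forall>j\<in>S. (i, j) \<in> {(a, b). a \<in> S \<and> b \<in> S \<and> adj A a b}\<^sup>*)"

end

theory Submission
  imports Defs
begin

lemma qf_sum: "(u::real^'n) \<bullet> (M *v w) = (\<Sum>i\<in>UNIV. \<Sum>j\<in>UNIV. u$i * M$i$j * w$j)"
  by (simp add: inner_vec_def matrix_vector_mult_def sum_distrib_left mult.assoc)

lemma qf_sym:
  assumes "transpose M = M"
  shows "(u::real^'n) \<bullet> (M *v w) = w \<bullet> (M *v u)"
proof -
  have s: "M$i$j = M$j$i" for i j using assms by (metis transpose_def vec_lambda_beta)
  show ?thesis unfolding qf_sum
    apply (subst sum.swap) using s by (simp add: mult.commute mult.left_commute)
qed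

lemma nsd_eq:
  fixes M :: "real^'n^'n"
  assumes sym: "transpose M = M"
    and le: "\<And>w. w \<bullet> (M *v w) \<le> mu * (w \<bullet> w)"
    and ge: "u \<bullet> (M *v u) \<ge> mu * (u \<bullet> u)"
  shows "M *v u = mu *\<^sub>R u"
proof -
  define w where "w = M *v u - mu *\<^sub>R u"
  define a where "a = w \<bullet> w"
  define b where "b = w \<bullet> (M *v w) - mu * (w \<bullet> w)"
  define c where "c = u \<bullet> (M *v u) - mu * (u \<bullet> u)"
  have b: "b \<le> 0" using le[of w] by (simp add: b_def)
  have c: "c \<ge> 0" using ge by (simp add: c_def)
  have aw: "a = w \<bullet> (M *v u) - mu * (w \<bullet> u)"
    by (simp add: a_def w_def inner_diff_right inner_diff_left inner_commute algebra_simps)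
  have key: "c + 2*t*a + t^2 * b \<le> 0" for t
  proof -
    have "(u + t *\<^sub>R w) \<bullet> (M *v (u + t *\<^sub>R w)) \<le> mu * ((u + t *\<^sub>R w) \<bullet> (u + t *\<^sub>R w))"
      by (rule le)
    moreover have "u \<bullet> (M *v w) = w \<bullet> (M *v u)" by (rule qf_sym[OF sym])
    ultimately show ?thesis
      by (simp add: aw b_def c_def algebra_simps inner_add_left inner_add_right inner_commute power2_eq_square)
  qed
  have "a = 0"
  proof (rule ccontr)
    assume "a \<noteq> 0"
    then have ap: "a > 0" by (simp add: a_def)
    define t where "t = a / (1 - b)"
    have t: "t > 0" using ap b by (simp add: t_def)
    have "2*t*a + t^2 * b \<le> 0" using key[of t] c by linarith
    moreover have "2*t*a + t^2 * b = t * (2*a + t*b)" by (simp add: power2_eq_square algebra_simps)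
    moreover have "2*a + t*b > 0"
    proof -
      have "t * b = a * b / (1 - b)" by (simp add: t_def)
      moreover have "a * b / (1-b) > - a"
      proof -
        have "a * b > - a * (1 - b)" using ap b by (simp add: algebra_simps)
        then show ?thesis using b by (simp add: field_simps)
      qed
      ultimately show ?thesis using ap by linarith
    qed
    ultimately show False using t by (simp add: mult_pos_pos) (metis mult_pos_pos not_le)
  qed
  then show ?thesis by (simp add: a_def w_def)
qed

lemma ground_state:
  fixes B :: "real^'n^'n"
  assumes sym: "transpose B = B"
    and off: "\<And>i j. i \<noteq> j \<Longrightarrow> B$i$j \<ge> 0"
    and ypos: "\<And>i. y$i > 0"
    and yeig: "B *v y = l *\<^sub>R y"
  shows "u \<bullet> (B *v u) \<le> l * (u \<bullet> u)"
proof -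
  have s: "B$i$j = B$j$i" for i j using sym by (metis transpose_def vec_lambda_beta)
  have yi: "(\<Sum>j\<in>UNIV. B$i$j * y$j) = l * y$i" for i
    using arg_cong[OF yeig, of "\<lambda>z. z$i"] by (simp add: matrix_vector_mult_def)
  define P where "P i j = B$i$j * y$j * (u$i)^2 / y$i" for i j
  define Q where "Q i j = B$i$j * u$i * u$j" for i j
  have lhs: "u \<bullet> (B *v u) = (\<Sum>i\<in>UNIV. \<Sum>j\<in>UNIV. Q i j)"
    unfolding qf_sum Q_def by (simp add: mult.assoc mult.left_commute)
  have rhs: "l * (u \<bullet> u) = (\<Sum>i\<in>UNIV. \<Sum>j\<in>UNIV. P i j)"
  proof -
    have "l * (u \<bullet> u) = (\<Sum>i\<in>UNIV. (u$i)^2 / y$i * (l * y$i))"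
      using ypos by (auto simp add: inner_vec_def sum_distrib_left power2_eq_square field_simps intro!: sum.cong) (metis less_irrefl)
    also have "\<dots> = (\<Sum>i\<in>UNIV. \<Sum>j\<in>UNIV. P i j)"
      unfolding yi[symmetric] P_def by (simp add: sum_distrib_left mult.commute mult.left_commute)
    finally show ?thesis .
  qed
  have swap: "(\<Sum>i\<in>UNIV. \<Sum>j\<in>UNIV. P i j) = (\<Sum>i\<in>UNIV. \<Sum>j\<in>UNIV. P j i)"
    by (rule sum.swap)
  have trm: "P i j - 2 * Q i j + P j i = B$i$j * y$i * y$j * (u$i / y$i - u$j / y$j)^2" for i j
  proof -
    have "y$i \<noteq> 0" "y$j \<noteq> 0" using ypos[of i] ypos[of j] by auto
    then show ?thesis unfolding P_def Q_def s[of j i]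
      by (simp add: field_simps power2_eq_square)
  qed
  have nn: "0 \<le> B$i$j * y$i * y$j * (u$i / y$i - u$j / y$j)^2" for i j
  proof (cases "i = j")
    case True then show ?thesis by simp
  next
    case False then show ?thesis using off[OF False] ypos[of i] ypos[of j] by simp
  qed
  have "0 \<le> (\<Sum>i\<in>UNIV. \<Sum>j\<in>UNIV. P i j - 2 * Q i j + P j i)"
    unfolding trm by (intro sum_nonneg nn)
  also have "\<dots> = 2 * ((\<Sum>i\<in>UNIV. \<Sum>j\<in>UNIV. P i j) - (\<Sum>i\<in>UNIV. \<Sum>j\<in>UNIV. Q i j))"
    using swap by (simp add: sum.distrib sum_subtractf sum_distrib_left)
  finally show ?thesis using lhs rhs by simp
qed

lemma eig_finite:
  fixes M :: "real^'n^'n"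
  assumes sym: "transpose M = M"
  shows "finite {l. is_eigenvalue M l}"
proof -
  define L where "L = {l. is_eigenvalue M l}"
  define ev where "ev l = (SOME x. x \<noteq> 0 \<and> M *v x = l *\<^sub>R x)" for l
  have ev: "ev l \<noteq> 0 \<and> M *v ev l = l *\<^sub>R ev l" if "l \<in> L" for l
    using that unfolding L_def is_eigenvalue_def ev_def mem_Collect_eq by (rule someI_ex)
  have orth: "ev l \<bullet> ev l' = 0" if "l \<in> L" "l' \<in> L" "l \<noteq> l'" for l l'
  proof -
    have "l * (ev l \<bullet> ev l') = ev l' \<bullet> (M *v ev l)" using ev[OF that(1)] by (simp add: inner_commute)
    also have "\<dots> = ev l \<bullet> (M *v ev l')" by (rule qf_sym[OF sym])
    also have "\<dots> = l' * (ev l \<bullet> ev l')" using ev[OF that(2)] by simp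
    finally show ?thesis using that(3) by simp
  qed
  have inj: "inj_on ev L"
  proof (rule inj_onI)
    fix l l' assume a: "l \<in> L" "l' \<in> L" "ev l = ev l'"
    show "l = l'"
    proof (rule ccontr)
      assume "l \<noteq> l'"
      then have "ev l \<bullet> ev l = 0" using orth[OF a(1,2)] a(3) by simp
      then show False using ev[OF a(1)] by simp
    qed
  qed
  have "pairwise orthogonal (ev ` L)"
    unfolding pairwise_def orthogonal_def using orth by auto
  moreover have "0 \<notin> ev ` L" using ev by auto
  ultimately have "independent (ev ` L)" by (rule pairwise_orthogonal_independent)
  then have "finite (ev ` L)" using independent_bound by blast
  then show ?thesis using finite_imageD[OF _ inj] unfolding L_def by blast
qed

lemma rayleigh_max:
  fixes M :: "real^'n^'n"
  assumes sym: "transpose M = M"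
  shows "u \<bullet> (M *v u) \<le> lambda_max M * (u \<bullet> u)"
proof -
  define f where "f w = w \<bullet> (M *v w)" for w :: "real^'n"
  have cont: "continuous_on (sphere 0 1) f"
    unfolding f_def by (intro continuous_intros linear_continuous_on matrix_vector_mul_bounded_linear)
  have ne: "sphere (0::real^'n) 1 \<noteq> {}"
    by (simp add: sphere_def) (metis norm_sgn sgn_zero_iff zero_neq_one vector_choose_size zero_le_one)
  obtain u0 where u0: "u0 \<in> sphere 0 1" "\<And>w. w \<in> sphere 0 1 \<Longrightarrow> f w \<le> f u0"
    using continuous_attains_sup[OF compact_sphere ne cont] by blast
  define mu where "mu = f u0"
  have bound: "f w \<le> mu * (w \<bullet> w)" for w
  proof (cases "w = 0")
    case True then show ?thesis by (simp add: f_def)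
  next
    case False
    define w' where "w' = w /\<^sub>R norm w"
    have "w' \<in> sphere 0 1" using False by (simp add: w'_def)
    then have "f w' \<le> mu" using u0 mu_def by auto
    moreover have "f w' = f w / (norm w)^2"
      by (simp add: f_def w'_def matrix_vector_mult_scaleR power2_eq_square field_simps)
    moreover have "w \<bullet> w = (norm w)^2" by (simp add: power2_norm_eq_inner)
    moreover have "norm w > 0" using False by simp
    ultimately show ?thesis by (simp add: field_simps)
  qed
  have u0u0: "u0 \<bullet> u0 = 1" using u0(1) by (simp add: inner_commute power2_norm_eq_inner[symmetric])
  have "M *v u0 = mu *\<^sub>R u0"
    by (rule nsd_eq[OF sym]) (use bound u0u0 in \<open>auto simp: f_def mu_def\<close>)
  moreover have "u0 \<noteq> 0" using u0(1) by auto
  ultimately have "is_eigenvalue M mu" unfolding is_eigenvalue_def by blast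
  then have "mu \<le> lambda_max M" unfolding lambda_max_def using eig_finite[OF sym] by simp
  then show ?thesis using bound[of u] unfolding f_def
    by (meson inner_ge_zero mult_right_mono order_trans)
qed

lemma closed_all:
  assumes conn: "induced_connected A UNIV"
    and cl: "\<forall>a\<in>T. \<forall>b. adj A a b \<longrightarrow> b \<in> T"
    and a: "a \<in> T"
  shows "b \<in> T"
proof -
  have "(a, b) \<in> {(a, b). a \<in> UNIV \<and> b \<in> UNIV \<and> adj A a b}\<^sup>*"
    using conn unfolding induced_connected_def by blast
  then show ?thesis
    by (induction rule: rtrancl_induct) (use a cl in auto)
qed

theorem theorem3p4:
  fixes A Delta :: "real^'n^'n" and v x y :: "real^'n" and sigma eps :: real
  assumes symA: "transpose A = A"
    and nonnegA: "\<forall>i j. A $ i $ j \<ge> 0"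
    and connG: "induced_connected A UNIV"
    and diagD: "\<forall>i j. i \<noteq> j \<longrightarrow> Delta $ i $ j = 0"
    and v_nonneg: "\<forall>i. v $ i \<ge> 0" and v_nz: "v \<noteq> 0"
    and sigma_pos: "sigma > 0"
    and x_nz: "x \<noteq> 0"
    and x_eig: "(A + Delta - sigma *\<^sub>R outer v v) *v x
                  = lambda_max (A + Delta - sigma *\<^sub>R outer v v) *\<^sub>R x"
    and vx: "v \<bullet> x \<ge> 0"
    and y_pos: "\<forall>i. y $ i > 0"
    and y_eig: "(A + Delta) *v y = lambda_max (A + Delta) *\<^sub>R y"
    and eps: "eps \<ge> 0"
  shows "induced_connected A {i. x $ i + eps * y $ i \<ge> 0}"
proof -
  define B where "B = A + Delta"
  define Mx where "Mx = B - sigma *\<^sub>R outer v v"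
  define m where "m = lambda_max Mx"
  define lam where "lam = lambda_max B"
  have Asym: "A$i$j = A$j$i" for i j using symA by (metis transpose_def vec_lambda_beta)
  have Dsym: "Delta$i$j = Delta$j$i" for i j using diagD by (cases "i = j") auto
  have Bsym: "transpose B = B"
    unfolding B_def transpose_def by (simp add: vec_eq_iff Asym Dsym)
  have Mxsym: "transpose Mx = Mx"
    unfolding Mx_def B_def transpose_def outer_def by (simp add: vec_eq_iff Asym Dsym mult.commute)
  have Boff: "B$i$j = A$i$j" if "i \<noteq> j" for i j using diagD that by (simp add: B_def)
  have Mxv: "Mx *v u = B *v u - (sigma * (v \<bullet> u)) *\<^sub>R v" for u
    unfolding Mx_def by (simp add: vec_eq_iff matrix_vector_mult_def outer_def inner_vec_def
        sum_distrib_left algebra_simps sum_subtractf)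
  have ground: "u \<bullet> (B *v u) \<le> lam * (u \<bullet> u)" for u
    by (rule ground_state[OF Bsym]) (use Boff nonnegA y_pos y_eig in \<open>auto simp: B_def lam_def\<close>)
  have ray: "u \<bullet> (Mx *v u) \<le> m * (u \<bullet> u)" for u
    unfolding m_def by (rule rayleigh_max[OF Mxsym])
  have xe: "Mx *v x = m *\<^sub>R x" using x_eig by (simp add: Mx_def B_def m_def)
  have Bx: "B *v x = m *\<^sub>R x + (sigma * (v \<bullet> x)) *\<^sub>R v" using Mxv[of x] xe by simp
  have mlam: "m \<le> lam"
  proof -
    have "x \<bullet> (B *v x) = m * (x \<bullet> x) + sigma * (v \<bullet> x)^2"
      by (simp add: Bx inner_add_right power2_eq_square inner_commute)
    then have "m * (x \<bullet> x) \<le> lam * (x \<bullet> x)" using ground[of x] sigma_pos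
      by (smt (verit) mult_nonneg_nonneg zero_le_power2)
    moreover have "x \<bullet> x > 0" using x_nz by simp
    ultimately show ?thesis by simp
  qed
  define z where "z = x + eps *\<^sub>R y"
  have ye: "B *v y = lam *\<^sub>R y" using y_eig by (simp add: B_def lam_def)
  have K: "(B *v z)$i \<ge> m * z$i" for i
  proof -
    have "(B *v z)$i = m * x$i + sigma * (v \<bullet> x) * v$i + eps * lam * y$i"
      by (simp add: z_def matrix_vector_right_distrib matrix_vector_mult_scaleR Bx ye)
    moreover have "sigma * (v \<bullet> x) * v$i \<ge> 0" using sigma_pos vx v_nonneg by simp
    moreover have "eps * lam * y$i \<ge> eps * m * y$i"
      using eps mlam y_pos by (metis less_imp_le mult_left_mono mult_right_mono)
    ultimately show ?thesis by (simp add: z_def algebra_simps)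
  qed
  define S where "S = {i. x $ i + eps * y $ i \<ge> 0}"
  have zS: "i \<in> S \<longleftrightarrow> z$i \<ge> 0" for i by (simp add: S_def z_def)
  define zr where "zr T = (\<chi> i. if i \<in> T then z$i else (0::real))" for T
  define r where "r i = (\<Sum>j\<in>UNIV. if j \<notin> S then A$i$j * z$j else 0)" for i
  have rle: "r i \<le> 0" for i
    unfolding r_def using zS nonnegA by (intro sum_nonpos) (auto simp: mult_nonneg_nonpos)
  have half: "(\<forall>i\<in>T. (B *v zr T')$i = 0) \<and> (\<forall>i\<in>T. (B *v zr T)$i = (B *v z)$i - r i)
      \<and> zr T \<bullet> (B *v zr T') = 0 \<and> zr T \<bullet> zr T' = 0 \<and> zr T \<bullet> (B *v zr T) \<ge> m * (zr T \<bullet> zr T)"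
    if T: "T \<subseteq> S" "T' = S - T" "\<forall>a\<in>T. \<forall>b\<in>T'. A$a$b = 0" for T T'
  proof -
    have c1: "(B *v zr T')$i = 0" if "i \<in> T" for i
    proof -
      have "B$i$j * (zr T')$j = 0" for j
        using T that Boff[of i j] by (cases "j \<in> T'") (auto simp: zr_def)
      then show ?thesis unfolding matrix_vector_mult_def vec_lambda_beta by (intro sum.neutral) blast
    qed
    have c2: "(B *v zr T)$i = (B *v z)$i - r i" if "i \<in> T" for i
    proof -
      have "B$i$j * z$j = B$i$j * (zr T)$j + (if j \<notin> S then A$i$j * z$j else 0)" for j
        using T that Boff[of i j] by (cases "j \<in> T"; cases "j \<in> S") (auto simp: zr_def)
      then show ?thesis by (simp add: matrix_vector_mult_def r_def sum.distrib)
    qed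
    have cross: "zr T \<bullet> (B *v zr T') = 0"
      unfolding inner_vec_def using c1 by (intro sum.neutral) (auto simp: zr_def)
    have orth: "zr T \<bullet> zr T' = 0"
      unfolding inner_vec_def using T by (intro sum.neutral) (auto simp: zr_def)
    have qi: "m * (zr T $ i * zr T $ i) \<le> zr T $ i * (B *v zr T) $ i" for i
    proof (cases "i \<in> T")
      case True
      then have "(B *v zr T)$i \<ge> m * z$i" using c2 K[of i] rle[of i] by simp
      moreover have "z$i \<ge> 0" using True T zS by auto
      ultimately show ?thesis using True
        by (simp add: zr_def) (metis mult.assoc mult.commute mult_left_mono)
    qed (simp add: zr_def)
    have "(\<Sum>i\<in>UNIV. m * (zr T $ i * zr T $ i)) \<le> (\<Sum>i\<in>UNIV. zr T $ i * (B *v zr T) $ i)"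
      by (rule sum_mono) (rule qi)
    then have q: "zr T \<bullet> (B *v zr T) \<ge> m * (zr T \<bullet> zr T)"
      by (simp add: inner_vec_def sum_distrib_left)
    show ?thesis using c1 c2 cross orth q by blast
  qed
  have core: "\<forall>a\<in>T. \<forall>b. adj A a b \<longrightarrow> b \<in> T"
    if T: "T \<subseteq> S" "T' = S - T" "\<forall>a\<in>T. \<forall>b\<in>T'. A$a$b = 0" "\<forall>a\<in>T'. \<forall>b\<in>T. A$a$b = 0"
      and al: "al \<noteq> 0" and vu: "v \<bullet> (al *\<^sub>R zr T + be *\<^sub>R zr T') = 0" for T T' al be
  proof -
    have T2: "T' \<subseteq> S" "T = S - T'" using T by auto
    note h1 = half[OF T(1,2,3)] and h2 = half[OF T2 T(4)]
    define u where "u = al *\<^sub>R zr T + be *\<^sub>R zr T'"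
    have uBu: "u \<bullet> (B *v u) = al^2 * (zr T \<bullet> (B *v zr T)) + be^2 * (zr T' \<bullet> (B *v zr T'))"
      using h1 h2 by (simp add: u_def inner_add_left inner_add_right matrix_vector_right_distrib
          matrix_vector_mult_scaleR power2_eq_square algebra_simps)
    have uu: "u \<bullet> u = al^2 * (zr T \<bullet> zr T) + be^2 * (zr T' \<bullet> zr T')"
      using h1 h2 by (simp add: u_def inner_add_left inner_add_right power2_eq_square algebra_simps inner_commute)
    have "u \<bullet> (B *v u) \<ge> m * (u \<bullet> u)"
    proof -
      have "al^2 * (m * (zr T \<bullet> zr T)) \<le> al^2 * (zr T \<bullet> (B *v zr T))"
        using h1 by (intro mult_left_mono) auto
      moreover have "be^2 * (m * (zr T' \<bullet> zr T')) \<le> be^2 * (zr T' \<bullet> (B *v zr T'))"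
        using h2 by (intro mult_left_mono) auto
      ultimately show ?thesis unfolding uBu uu by (simp add: algebra_simps)
    qed
    moreover have MB: "Mx *v u = B *v u" using vu Mxv[of u] by (simp add: u_def)
    ultimately have "u \<bullet> (Mx *v u) \<ge> m * (u \<bullet> u)" by simp
    then have "Mx *v u = m *\<^sub>R u" by (rule nsd_eq[OF Mxsym ray])
    then have Bu: "B *v u = m *\<^sub>R u" using MB by simp
    show ?thesis
    proof (intro ballI allI impI)
      fix a b assume a: "a \<in> T" and ab: "adj A a b"
      have "(B *v u)$a = al * (B *v zr T)$a"
        using h1 a by (simp add: u_def matrix_vector_right_distrib matrix_vector_mult_scaleR)
      moreover have "u$a = al * z$a" using a T by (auto simp: u_def zr_def)
      ultimately have "(B *v zr T)$a = m * z$a" using Bu al by (simp add: vec_eq_iff)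
      then have "r a = 0" using h1 a K[of a] rle[of a] by simp
      define f where "f j = -(if j \<notin> S then A$a$j * z$j else 0)" for j
      have fs: "(\<Sum>j\<in>UNIV. f j) = 0" using \<open>r a = 0\<close>
        by (simp add: r_def f_def sum_negf)
      have fnn: "\<forall>j\<in>UNIV. 0 \<le> f j"
        using zS nonnegA by (auto simp: mult_nonneg_nonpos f_def)
      have "f b \<le> (\<Sum>j\<in>UNIV. f j)"
        by (rule member_le_sum) (use fnn in auto)
      then have "f b = 0" using fs fnn by (metis UNIV_I order_antisym)
      then have "b \<notin> S \<Longrightarrow> A$a$b * z$b = 0" by (simp add: f_def)
      moreover have "A$a$b > 0" using ab by (simp add: adj_def)
      moreover have "b \<notin> S \<Longrightarrow> z$b \<noteq> 0" using zS by force
      ultimately have "b \<in> S" by auto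
      moreover have "b \<notin> T'" using T(3) a ab by (auto simp: adj_def)
      ultimately show "b \<in> T" using T by auto
    qed
  qed
  show ?thesis
  proof (rule ccontr)
    let ?R = "{(a, b). a \<in> S \<and> b \<in> S \<and> adj A a b}"
    assume "\<not> ?thesis"
    then obtain i0 j0 where ij: "i0 \<in> S" "j0 \<in> S" "(i0, j0) \<notin> ?R\<^sup>*"
      unfolding induced_connected_def S_def by blast
    define S1 where "S1 = {j \<in> S. (i0, j) \<in> ?R\<^sup>*}"
    define S2 where "S2 = S - S1"
    have i0: "i0 \<in> S1" using ij by (simp add: S1_def)
    have j0: "j0 \<in> S2" using ij by (simp add: S1_def S2_def)
    have ne12: "\<forall>a\<in>S1. \<forall>b\<in>S2. A$a$b = 0"
    proof (intro ballI)
      fix a b assume a: "a \<in> S1" and b: "b \<in> S2"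
      show "A$a$b = 0"
      proof (rule ccontr)
        assume "A$a$b \<noteq> 0"
        then have "A$a$b > 0" using nonnegA by (metis order_le_less)
        moreover have "a \<noteq> b" using a b by (auto simp: S2_def)
        ultimately have "(a, b) \<in> ?R" using a b by (auto simp: adj_def S1_def S2_def)
        then have "(i0, b) \<in> ?R\<^sup>*" using a by (auto simp: S1_def intro: rtrancl_into_rtrancl)
        then show False using b by (auto simp: S1_def S2_def)
      qed
    qed
    have ne21: "\<forall>a\<in>S2. \<forall>b\<in>S1. A$a$b = 0" using ne12 Asym by metis
    have S1S: "S1 \<subseteq> S" "S2 \<subseteq> S" by (auto simp: S1_def S2_def)
    show False
    proof (cases "v \<bullet> zr S2 = 0")
      case False
      have "\<forall>a\<in>S1. \<forall>b. adj A a b \<longrightarrow> b \<in> S1"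
        by (rule core[OF S1S(1) S2_def ne12 ne21 False, of "- (v \<bullet> zr S1)"])
          (simp add: inner_add_right algebra_simps)
      then have "j0 \<in> S1" using closed_all[OF connG _ i0] by blast
      then show False using j0 by (simp add: S2_def)
    next
      case True
      have "S1 = S - S2" using S1S by (auto simp: S2_def)
      then have "\<forall>a\<in>S2. \<forall>b. adj A a b \<longrightarrow> b \<in> S2"
        by (intro core[OF S1S(2) _ ne21 ne12 one_neq_zero, of 0]) (use True in auto)
      then have "i0 \<in> S2" using closed_all[OF connG _ j0] by blast
      then show False using i0 by (simp add: S2_def)
    qed
  qed
qed

end
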